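(* Let $r,k,s$ be integers with $k+r\neq 0$ and $k+s\neq 0$, and let $n\ge 0$ be an integer. Then \[ 2\sum_{j=0}^{n}(-1)^{(k+s)j}L_{r-s}^{j}L_{2k+r+s}^{n-j}=\sum_{j=0}^{n}\left(\frac{L_{k+r}L_{k+s}}{2}\right)^j\left(L_{2k+r+s}^{n-j}+(-1)^{(k+s)(n-j)}L_{r-s}^{n-j}\right)=2\,\frac{L_{2k+r+s}^{n+1}-(-1)^{(k+s)(n+1)}L_{r-s}^{n+1}}{5F_{k+r}F_{k+s}}. \]
   Context: $F_n$ and $L_n$ denote the Fibonacci and Lucas numbers, defined for all integers $n$ by $F_0=0,F_1=1$, $L_0=2,L_1=1$ and $x_n=x_{n-1}+x_{n-2}$; equivalently $F_n=(\alpha^n-\beta^n)/(\alpha-\beta)$, $L_n=\alpha^n+\beta^n$ with $\alpha=(1+\sqrt5)/2$, $\beta=(1-\sqrt5)/2$. In particular $F_{-n}=(-1)^{n-1}F_n$ and $L_{-n}=(-1)^nL_n$. *)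

theory Defs
  imports Complex_Main
begin

fun fibn :: "nat \<Rightarrow> int" where
  "fibn 0 = 0"
| "fibn (Suc 0) = 1"
| "fibn (Suc (Suc n)) = fibn (Suc n) + fibn n"

fun lucn :: "nat \<Rightarrow> int" where
  "lucn 0 = 2"
| "lucn (Suc 0) = 1"
| "lucn (Suc (Suc n)) = lucn (Suc n) + lucn n"

definition fibz :: "int \<Rightarrow> int" where
  "fibz m = (if m \<ge> 0 then fibn (nat m) else (-1) ^ (nat (-m) + 1) * fibn (nat (-m)))"

definition lucz :: "int \<Rightarrow> int" where
  "lucz m = (if m \<ge> 0 then lucn (nat m) else (-1) ^ nat (-m) * lucn (nat (-m)))"

end

theory Submission
  imports Defs
begin

definition "alpha = (1 + sqrt 5) / (2::real)"
definition "beta = (1 - sqrt 5) / (2::real)"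

lemma s5: "sqrt 5 * sqrt 5 = (5::real)" by simp

lemma ab_mult: "alpha * beta = -1"
  unfolding alpha_def beta_def by (simp add: algebra_simps s5)
lemma a_sq: "alpha^2 = alpha + 1"
  unfolding alpha_def by (simp add: power2_eq_square algebra_simps s5)
lemma b_sq: "beta^2 = beta + 1"
  unfolding beta_def by (simp add: power2_eq_square field_simps s5)
lemma a_nz: "alpha \<noteq> 0" using ab_mult by auto
lemma b_nz: "beta \<noteq> 0" using ab_mult by auto
lemma amb: "alpha - beta = sqrt 5" unfolding alpha_def beta_def by (simp add: field_simps)

lemma step_a: "alpha ^ Suc (Suc n) = alpha ^ Suc n + alpha ^ n"
proof -
  have "alpha ^ Suc (Suc n) = alpha^2 * alpha^n" by (simp add: power2_eq_square)
  thus ?thesis using a_sq by (simp add: algebra_simps)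
qed
lemma step_b: "beta ^ Suc (Suc n) = beta ^ Suc n + beta ^ n"
proof -
  have "beta ^ Suc (Suc n) = beta^2 * beta^n" by (simp add: power2_eq_square)
  thus ?thesis using b_sq by (simp add: algebra_simps)
qed

lemma lucn_binet: "real_of_int (lucn n) = alpha ^ n + beta ^ n"
proof (induction n rule: lucn.induct)
  case 1 then show ?case by simp
next
  case 2 then show ?case unfolding alpha_def beta_def by (simp add: field_simps)
next
  case (3 n) then show ?case using step_a[of n] step_b[of n] by simp
qed

lemma fibn_binet: "real_of_int (fibn n) * sqrt 5 = alpha ^ n - beta ^ n"
proof (induction n rule: fibn.induct)
  case 1 then show ?case by simp
next
  case 2 then show ?case unfolding alpha_def beta_def by (simp add: field_simps)
next
  case (3 n) then show ?case using step_a[of n] step_b[of n] by (simp add: algebra_simps)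
qed

lemma fibn_pos: "n \<ge> 1 \<Longrightarrow> fibn n > 0"
proof (induction n rule: fibn.induct)
  case (3 n) then show ?case by (cases n) auto
qed auto

lemma ainv: "inverse alpha = - beta" using ab_mult
  by (metis a_nz minus_equation_iff mult_minus_right inverse_unique)
lemma binv: "inverse beta = - alpha" using ab_mult
  by (metis b_nz minus_equation_iff mult_minus_left mult.commute inverse_unique)

lemma lucz_binet: "real_of_int (lucz m) = alpha powi m + beta powi m"
proof (cases "m \<ge> 0")
  case True
  then obtain n where mn: "m = int n" by (metis nonneg_eq_int)
  have "lucz m = lucn n" unfolding mn lucz_def by simp
  then show ?thesis using lucn_binet[of n] mn by simp
next
  case False
  then obtain n where m: "m = - int n" by (metis nonpos_int_cases linear)
  have "alpha powi m + beta powi m = (-beta)^n + (-alpha)^n"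
    unfolding m power_int_minus by (simp add: power_inverse[symmetric] ainv binv)
  also have "\<dots> = (-1)^n * (alpha^n + beta^n)"
    by (simp only: power_minus[of beta n] power_minus[of alpha n] distrib_left add.commute)
  finally have e: "alpha powi m + beta powi m = (-1)^n * (alpha^n + beta^n)" .
  have lz: "lucz m = (-1)^n * lucn n" using False m by (simp add: lucz_def)
  show ?thesis unfolding e lz using lucn_binet[of n] by simp
qed

lemma fibz_binet: "real_of_int (fibz m) * sqrt 5 = alpha powi m - beta powi m"
proof (cases "m \<ge> 0")
  case True
  then obtain n where mn: "m = int n" by (metis nonneg_eq_int)
  have "fibz m = fibn n" unfolding mn fibz_def by simp
  then show ?thesis using fibn_binet[of n] mn by simp
next
  case False
  then obtain n where m: "m = - int n" by (metis nonpos_int_cases linear)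
  have "alpha powi m - beta powi m = (-beta)^n - (-alpha)^n"
    unfolding m power_int_minus by (simp add: power_inverse[symmetric] ainv binv)
  also have "\<dots> = (-1)^(n+1) * (alpha^n - beta^n)"
    by (simp only: power_minus[of beta n] power_minus[of alpha n]) (simp add: right_diff_distrib)
  finally have e: "alpha powi m - beta powi m = (-1)^(n+1) * (alpha^n - beta^n)" .
  have fz: "fibz m = (-1)^(n+1) * fibn n" using False m by (simp add: fibz_def)
  have "real_of_int (fibz m) * sqrt 5 = (-1)^(n+1) * (real_of_int (fibn n) * sqrt 5)"
    unfolding fz by simp
  then show ?thesis unfolding e fibn_binet .
qed

lemma fibz_nz: assumes "m \<noteq> 0" shows "fibz m \<noteq> 0"
proof (cases "m \<ge> 0")
  case True
  hence "nat m \<ge> 1" using assms by simp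
  thus ?thesis using fibn_pos[of "nat m"] True unfolding fibz_def by simp
next
  case False
  hence "nat (-m) \<ge> 1" by simp
  thus ?thesis using fibn_pos[of "nat (-m)"] False unfolding fibz_def by simp
qed

lemma cross: "alpha powi a * beta powi b = (-1) powi b * alpha powi (a - b)"
proof -
  have "alpha powi a = alpha powi (a-b) * alpha powi b"
    using power_int_add[of alpha "a-b" b] a_nz by simp
  hence "alpha powi a * beta powi b = alpha powi (a-b) * (alpha*beta) powi b"
    by (simp add: power_int_mult_distrib)
  thus ?thesis by (simp add: ab_mult)
qed

lemma cross2: "beta powi a * alpha powi b = (-1) powi b * beta powi (a - b)"
proof -
  have "beta powi a = beta powi (a-b) * beta powi b"
    using power_int_add[of beta "a-b" b] b_nz by simp
  hence "beta powi a * alpha powi b = beta powi (a-b) * (alpha*beta) powi b"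
    by (simp add: power_int_mult_distrib)
  thus ?thesis by (simp add: ab_mult)
qed

lemma same_a: "alpha powi a * alpha powi b = alpha powi (a+b)"
  using power_int_add[of alpha a b] a_nz by simp
lemma same_b: "beta powi a * beta powi b = beta powi (a+b)"
  using power_int_add[of beta a b] b_nz by simp

lemma expand4: "((p::real) + q) * (u + v) = p*u + p*v + q*u + q*v"
  by (simp add: algebra_simps)
lemma expand4m: "((p::real) - q) * (u - v) = p*u - p*v - q*u + q*v"
  by (simp add: algebra_simps)

lemma luc_prod: "real_of_int (lucz a) * real_of_int (lucz b)
   = real_of_int (lucz (a+b)) + (-1) powi b * real_of_int (lucz (a-b))"
  unfolding lucz_binet expand4 same_a same_b cross cross2
  by (simp add: algebra_simps)

lemma fib_prod: "5 * real_of_int (fibz a) * real_of_int (fibz b)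
   = real_of_int (lucz (a+b)) - (-1) powi b * real_of_int (lucz (a-b))"
proof -
  have "5 * real_of_int (fibz a) * real_of_int (fibz b)
     = (real_of_int (fibz a) * sqrt 5) * (real_of_int (fibz b) * sqrt 5)"
    using s5 by (simp add: algebra_simps)
  also have "\<dots> = (alpha powi a - beta powi a) * (alpha powi b - beta powi b)"
    by (simp add: fibz_binet)
  also have "\<dots> = alpha powi (a+b) - (-1) powi b * alpha powi (a - b)
       - (-1) powi b * beta powi (a - b) + beta powi (a+b)"
    unfolding expand4m same_a same_b cross cross2 ..
  finally show ?thesis unfolding lucz_binet
    by (simp add: algebra_simps)
qed

lemma G1: fixes x y :: real assumes "x \<noteq> y"
  shows "(\<Sum>j=0..n. y^j * x^(n-j)) = (x^(n+1) - y^(n+1)) / (x - y)"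
proof -
  have "x ^ Suc n - y ^ Suc n = (y - x) * (\<Sum>p<Suc n. y ^ p * x ^ (n - p)) * (-1)"
    using diff_power_eq_sum[of y n x] by (simp add: algebra_simps)
  moreover have "{..<Suc n} = {0..n}" by auto
  ultimately show ?thesis using assms by (simp add: field_simps)
qed

lemma G2: fixes x y :: real assumes "x \<noteq> y"
  shows "(\<Sum>j=0..n. ((x+y)/2)^j * (x^(n-j) + y^(n-j))) = 2 * (x^(n+1) - y^(n+1)) / (x - y)"
proof -
  define m where "m = (x+y)/2"
  have xm: "x \<noteq> m" "y \<noteq> m" using assms unfolding m_def by auto
  have "(\<Sum>j=0..n. m^j * (x^(n-j) + y^(n-j)))
      = (\<Sum>j=0..n. m^j * x^(n-j)) + (\<Sum>j=0..n. m^j * y^(n-j))"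
    by (simp add: algebra_simps sum.distrib)
  also have "\<dots> = (x^(n+1) - m^(n+1)) / (x - m) + (y^(n+1) - m^(n+1)) / (y - m)"
    using G1[OF xm(1)] G1[OF xm(2)] by simp
  also have "\<dots> = 2 * (x^(n+1) - y^(n+1)) / (x - y)"
  proof -
    have d: "x - m = (x-y)/2" "y - m = -((x-y)/2)" unfolding m_def by (simp_all add: field_simps)
    have "\<And>P Q d::real. d \<noteq> 0 \<Longrightarrow> P/(d/2) + Q/(-(d/2)) = 2*(P-Q)/d"
      by (simp add: field_simps)
    from this[of "x-y" "x^(n+1) - m^(n+1)" "y^(n+1) - m^(n+1)"] assms
    show ?thesis unfolding d by simp
  qed
  finally show ?thesis unfolding m_def .
qed

theorem theorem8:
  fixes r k s :: int and n :: nat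
  assumes "k + r \<noteq> 0" and "k + s \<noteq> 0"
  shows "2 * (\<Sum>j=0..n. (-1::real) powi ((k+s) * int j) * real_of_int (lucz (r-s)) ^ j
              * real_of_int (lucz (2*k+r+s)) ^ (n-j))
         = (\<Sum>j=0..n. (real_of_int (lucz (k+r)) * real_of_int (lucz (k+s)) / 2) ^ j
              * (real_of_int (lucz (2*k+r+s)) ^ (n-j)
                 + (-1::real) powi ((k+s) * int (n-j)) * real_of_int (lucz (r-s)) ^ (n-j)))
       \<and> (\<Sum>j=0..n. (real_of_int (lucz (k+r)) * real_of_int (lucz (k+s)) / 2) ^ j
              * (real_of_int (lucz (2*k+r+s)) ^ (n-j)
                 + (-1::real) powi ((k+s) * int (n-j)) * real_of_int (lucz (r-s)) ^ (n-j)))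
         = 2 * (real_of_int (lucz (2*k+r+s)) ^ (n+1)
                - (-1::real) powi ((k+s) * int (n+1)) * real_of_int (lucz (r-s)) ^ (n+1))
             / (5 * real_of_int (fibz (k+r)) * real_of_int (fibz (k+s)))"
proof -
  define A where "A = real_of_int (lucz (2*k+r+s))"
  define B where "B = (-1::real) powi (k+s) * real_of_int (lucz (r-s))"
  have pw: "\<And>i. (-1::real) powi ((k+s) * int i) * real_of_int (lucz (r-s)) ^ i = B ^ i"
    unfolding B_def by (simp add: power_int_mult power_mult_distrib)
  have e1: "(k+r) + (k+s) = 2*k+r+s" "(k+r) - (k+s) = r - s" by simp_all
  have LL: "real_of_int (lucz (k+r)) * real_of_int (lucz (k+s)) = A + B"
    using luc_prod[of "k+r" "k+s"] unfolding A_def B_def e1 .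
  have FF: "5 * real_of_int (fibz (k+r)) * real_of_int (fibz (k+s)) = A - B"
    using fib_prod[of "k+r" "k+s"] unfolding A_def B_def e1 .
  have nz: "A - B \<noteq> 0" using FF fibz_nz assms by (metis mult_eq_0_iff of_int_eq_0_iff zero_neq_numeral)
  hence ne: "A \<noteq> B" by simp
  have s1: "(\<Sum>j=0..n. (-1::real) powi ((k+s) * int j) * real_of_int (lucz (r-s)) ^ j
              * real_of_int (lucz (2*k+r+s)) ^ (n-j)) = (\<Sum>j=0..n. B^j * A^(n-j))"
    unfolding A_def pw ..
  have s2: "(\<Sum>j=0..n. (real_of_int (lucz (k+r)) * real_of_int (lucz (k+s)) / 2) ^ j
              * (real_of_int (lucz (2*k+r+s)) ^ (n-j)
                 + (-1::real) powi ((k+s) * int (n-j)) * real_of_int (lucz (r-s)) ^ (n-j)))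
          = (\<Sum>j=0..n. ((A+B)/2)^j * (A^(n-j) + B^(n-j)))"
    unfolding LL A_def pw ..
  have s3: "(-1::real) powi ((k+s) * int (n+1)) * real_of_int (lucz (r-s)) ^ (n+1) = B^(n+1)"
    by (rule pw)
  have s4: "real_of_int (lucz (2*k+r+s)) ^ (n+1) = A^(n+1)" unfolding A_def ..
  show ?thesis unfolding s1 s2 s3 s4 FF
    using G1[OF ne, of n] G2[OF ne, of n] ne by (simp only: mult_2 add_divide_distrib diff_divide_distrib)
qed

end
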